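(* Let $A$, $\bar A$, $H$ be as in the context. Then $\frac m4\le\kappa([\bar A;A])=\kappa(H)=\frac{\sin\left(\frac{(3m_1m_2-1)\pi}{6m_1m_2}\right)}{\sin\left(\frac{\pi}{6m_1m_2}\right)}<m$.
   Context: Let $L_f>0$, integers $m_1\ge2$, $m_2\ge1$ with $m_1m_2$ even, $m=3m_1m_2$, $\bar d\ge5$ odd. $J_p\in\mathbb R^{(p-1)\times p}$ has $-1$ at $(k,k)$, $1$ at $(k,k+1)$, zero elsewhere. $H=mL_f(J_m\otimes I_{\bar d})$. $\mathcal M=\{im_1:i=1,\dots,3m_2-1\}$, $\mathcal M^C=\{1,\dots,m-1\}\setminus\mathcal M$; $\bar A=mL_f(J_{\mathcal M}\otimes I_{\bar d})$, $A=mL_f(J_{\mathcal M^C}\otimes I_{\bar d})$ where $J_{\mathcal M},J_{\mathcal M^C}$ are the rows of $J_m$ indexed by $\mathcal M,\mathcal M^C$. $[\bar A;A]$ is $\bar A$ stacked above $A$. For a matrix $M$, $\kappa(M)=\sqrt{\lambda_{\max}(MM^\top)/\lambda^+_{\min}(MM^\top)}$, where $\lambda^+_{\min}$ is the smallest positive eigenvalue. *)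

theory Defs
  imports Complex_Main "Jordan_Normal_Form.Char_Poly"
begin

definition Jmat :: "nat \<Rightarrow> real mat" where
  "Jmat p = mat (p - 1) p (\<lambda>(k, j). if j = k then -1 else if j = k + 1 then 1 else 0)"

definition kron :: "real mat \<Rightarrow> real mat \<Rightarrow> real mat" where
  "kron A B = mat (dim_row A * dim_row B) (dim_col A * dim_col B)
     (\<lambda>(i, j). A $$ (i div dim_row B, j div dim_col B) * B $$ (i mod dim_row B, j mod dim_col B))"

definition select_rows :: "real mat \<Rightarrow> nat list \<Rightarrow> real mat" where
  "select_rows A rs = mat (length rs) (dim_col A) (\<lambda>(i, j). A $$ (rs ! i, j))"

definition stack :: "real mat \<Rightarrow> real mat \<Rightarrow> real mat" where
  "stack A B = mat (dim_row A + dim_row B) (dim_col A)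
     (\<lambda>(i, j). if i < dim_row A then A $$ (i, j) else B $$ (i - dim_row A, j))"

(* index sets, 1-indexed as in the paper, listed increasingly *)
definition Mset :: "nat \<Rightarrow> nat \<Rightarrow> nat list" where
  "Mset m1 m2 = map (\<lambda>i. i * m1) [1..<3 * m2]"

definition MCset :: "nat \<Rightarrow> nat \<Rightarrow> nat list" where
  "MCset m1 m2 = filter (\<lambda>k. k \<notin> set (Mset m1 m2)) [1..<3 * m1 * m2]"

definition Jrows :: "nat \<Rightarrow> nat list \<Rightarrow> real mat" where
  "Jrows m rs = select_rows (Jmat m) (map (\<lambda>k. k - 1) rs)"

definition kappa :: "real mat \<Rightarrow> real" where
  "kappa M = sqrt (Max {l. eigenvalue (M * transpose_mat M) l}
                   / Min {l. eigenvalue (M * transpose_mat M) l \<and> l > 0})"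

end

theory Submission
  imports Defs
begin



lemma sprod_self_ge0: "(v::real vec) \<bullet> v \<ge> 0"
  unfolding scalar_prod_def by (intro sum_nonneg) auto

lemma sprod_self_pos: assumes "(v::real vec) \<in> carrier_vec n" "v \<noteq> 0\<^sub>v n" shows "v \<bullet> v > 0"
proof -
  from assms obtain i where i: "i < n" "v $ i \<noteq> 0" by (metis eq_vecI carrier_vecD index_zero_vec(1,2))
  have "v \<bullet> v = (\<Sum>j\<in>{0..<n}. v $ j * v $ j)" using assms unfolding scalar_prod_def by auto
  also have "\<dots> \<ge> v $ i * v $ i" 
    by (rule member_le_sum) (use i in auto)
  finally show ?thesis using i by (smt (verit) not_real_square_gt_zero)
qed

lemma eig_gram_nonneg:
  assumes N: "(N::real mat) \<in> carrier_mat r n" and ev: "eigenvalue (transpose_mat N * N) l"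
  shows "l \<ge> 0"
proof -
  from ev obtain v where v: "v \<in> carrier_vec n" "v \<noteq> 0\<^sub>v n" "(transpose_mat N * N) *\<^sub>v v = l \<cdot>\<^sub>v v"
    using N unfolding eigenvalue_def eigenvector_def by auto
  have "(transpose_mat N * N) *\<^sub>v v = transpose_mat N *\<^sub>v (N *\<^sub>v v)" using N v by auto
  hence "l * (v \<bullet> v) = (transpose_mat N *\<^sub>v (N *\<^sub>v v)) \<bullet> v" using v(1,3) by (metis scalar_prod_smult_left)
  also have "\<dots> = (N *\<^sub>v v) \<bullet> (N *\<^sub>v v)" by (rule transpose_vec_mult_scalar[OF N v(1)]) (use N v in auto)
  finally have "l * (v \<bullet> v) \<ge> 0" using sprod_self_ge0 by simp
  with sprod_self_pos[OF v(1,2)] show ?thesis by (simp add: zero_le_mult_iff)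
qed

lemma eig_transfer:
  assumes N: "(N::real mat) \<in> carrier_mat r n" and ev: "eigenvalue (N * transpose_mat N) l" and l: "l \<noteq> 0"
  shows "eigenvalue (transpose_mat N * N) l"
proof -
  from ev obtain v where v: "v \<in> carrier_vec r" "v \<noteq> 0\<^sub>v r" "(N * transpose_mat N) *\<^sub>v v = l \<cdot>\<^sub>v v"
    using N unfolding eigenvalue_def eigenvector_def by auto
  define w where "w = transpose_mat N *\<^sub>v v"
  have w: "w \<in> carrier_vec n" using N v(1) unfolding w_def by (metis mult_mat_vec_carrier transpose_carrier_mat)
  have Nw: "N *\<^sub>v w = l \<cdot>\<^sub>v v" using v N unfolding w_def by (metis assoc_mult_mat_vec transpose_carrier_mat)
  have "w \<noteq> 0\<^sub>v n"
  proof
    assume "w = 0\<^sub>v n"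
    hence "N *\<^sub>v w = 0\<^sub>v r" using N by auto
    hence "l \<cdot>\<^sub>v v = 0\<^sub>v r" using Nw by simp
    hence "\<forall>i<r. l * v $ i = 0" using v(1) by (metis index_smult_vec(1) index_zero_vec(1) carrier_vecD)
    hence "\<forall>i<r. v $ i = 0" using l by simp
    hence "v = 0\<^sub>v r" using v(1) by (intro eq_vecI) auto
    thus False using v by simp
  qed
  moreover have "(transpose_mat N * N) *\<^sub>v w = l \<cdot>\<^sub>v w"
  proof -
    have "(transpose_mat N * N) *\<^sub>v w = transpose_mat N *\<^sub>v (N *\<^sub>v w)" using N w by auto
    also have "\<dots> = transpose_mat N *\<^sub>v (l \<cdot>\<^sub>v v)" using Nw by simp
    also have "\<dots> = l \<cdot>\<^sub>v w" unfolding w_def using N v by (metis mult_mat_vec transpose_carrier_mat)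
    finally show ?thesis .
  qed
  ultimately show ?thesis unfolding eigenvalue_def eigenvector_def using w N by auto
qed

lemma eig_finite:
  assumes "(M::real mat) \<in> carrier_mat r r"
  shows "finite {l. eigenvalue M l}"
proof -
  have "char_poly M \<noteq> 0" using degree_monic_char_poly[OF assms] by (metis coeff_0 zero_neq_one)
  hence "finite {l. poly (char_poly M) l = 0}" by (rule poly_roots_finite)
  moreover have "{l. eigenvalue M l} = {l. poly (char_poly M) l = 0}" using eigenvalue_root_char_poly[OF assms] by blast
  ultimately show ?thesis by simp
qed

lemma kappa_via:
  assumes N: "(N::real mat) \<in> carrier_mat r n" and ne: "\<exists>l>0. eigenvalue (transpose_mat N * N) l"
  shows "kappa N = sqrt (Max {l. eigenvalue (transpose_mat N * N) l \<and> l > 0}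
                   / Min {l. eigenvalue (transpose_mat N * N) l \<and> l > 0})"
proof -
  define S where "S = {l. eigenvalue (N * transpose_mat N) l}"
  define P where "P = {l. eigenvalue (transpose_mat N * N) l \<and> l > 0}"
  have NT: "transpose_mat N \<in> carrier_mat n r" using N by auto
  have a: "l \<in> S \<Longrightarrow> l \<ge> 0" for l
    using eig_gram_nonneg[OF NT, of l] unfolding S_def mem_Collect_eq transpose_transpose by blast
  have b: "l \<in> P" if l1: "l \<in> S" and l2: "l \<noteq> 0" for l
  proof -
    have e: "eigenvalue (N * transpose_mat N) l" using l1 unfolding S_def by blast
    have "eigenvalue (transpose_mat N * N) l" by (rule eig_transfer[OF N e l2])
    moreover have "l > 0" using a[OF l1] l2 by linarith
    ultimately show ?thesis unfolding P_def by blast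
  qed
  have c: "l \<in> S" if l1: "l \<in> P" for l
  proof -
    have e: "eigenvalue (transpose_mat N * transpose_mat (transpose_mat N)) l" using l1 unfolding P_def transpose_transpose by blast
    have l2: "l \<noteq> 0" using l1 unfolding P_def by simp
    have "eigenvalue (transpose_mat (transpose_mat N) * transpose_mat N) l" by (rule eig_transfer[OF NT e l2])
    thus ?thesis unfolding S_def transpose_transpose by blast
  qed
  have SP: "{l \<in> S. l > 0} = P"
  proof
    show "{l \<in> S. l > 0} \<subseteq> P" using b by force
    show "P \<subseteq> {l \<in> S. l > 0}"
    proof
      fix l assume l: "l \<in> P"
      have "l \<in> S" by (rule c[OF l])
      moreover have "l > 0" using l unfolding P_def by simp
      ultimately show "l \<in> {l \<in> S. l > 0}" by simp
    qed
  qed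
  have fS: "finite S" unfolding S_def by (rule eig_finite[of _ r]) (use N in auto)
  have fP: "finite P" using c fS by (meson finite_subset subsetI)
  have Pne: "P \<noteq> {}" using ne unfolding P_def by auto
  have Sne: "S \<noteq> {}" using Pne c by auto
  have "Max S \<in> S" using fS Sne by (rule Max_in)
  obtain p where p: "p \<in> P" using Pne by auto
  have "p \<le> Max S" using fS c[OF p] by (rule Max_ge)
  hence "Max S \<noteq> 0" using p unfolding P_def by auto
  hence MSP: "Max S \<in> P" using b \<open>Max S \<in> S\<close> by simp
  have "Max S = Max P"
  proof (rule antisym)
    show "Max S \<le> Max P" using fP MSP by (rule Max_ge)
    show "Max P \<le> Max S" using fS fP Pne c by (meson Max_in Max_ge)
  qed
  moreover have "{l. eigenvalue (N * transpose_mat N) l \<and> l > 0} = P" using SP unfolding S_def by auto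
  ultimately show ?thesis unfolding kappa_def S_def P_def by (simp only:)
qed



lemma sum_split_block:
  fixes F :: "nat \<Rightarrow> 'a::comm_monoid_add"
  shows "(\<Sum>t\<in>{0..<n*d}. F t) = (\<Sum>s<n. \<Sum>p<d. F (s*d+p))"
proof (induction n)
  case 0 then show ?case by simp
next
  case (Suc n)
  have "{0..<Suc n * d} = {0..<n*d} \<union> {n*d..<n*d+d}" by auto
  hence "(\<Sum>t\<in>{0..<Suc n*d}. F t) = (\<Sum>t\<in>{0..<n*d}. F t) + (\<Sum>t\<in>{n*d..<n*d+d}. F t)"
    by (simp add: sum.union_disjoint ivl_disj_int)
  also have "(\<Sum>t\<in>{n*d..<n*d+d}. F t) = (\<Sum>p<d. F (n*d+p))"
    using sum.shift_bounds_nat_ivl[of F 0 "n*d" d] by (simp add: lessThan_atLeast0 add.commute)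
  finally show ?case using Suc by simp
qed

lemma sum_nth_distinct:
  assumes "distinct rs"
  shows "(\<Sum>s<length rs. G (rs ! s)) = (\<Sum>i\<in>set rs. (G i :: 'a::comm_monoid_add))"
proof -
  have "(\<Sum>i\<in>set rs. G i) = sum_list (map G rs)" using assms by (rule sum.distinct_set_conv_list)
  also have "\<dots> = (\<Sum>s = 0..<length rs. map G rs ! s)" by (simp add: sum_list_sum_nth)
  also have "\<dots> = (\<Sum>s<length rs. G (rs ! s))" by (simp add: lessThan_atLeast0)
  finally show ?thesis by simp
qed

definition Jf :: "nat \<Rightarrow> nat \<Rightarrow> real" where
  "Jf i j = (if j = i then -1 else if j = i+1 then 1 else 0)"

definition Kf :: "real \<Rightarrow> nat \<Rightarrow> nat \<Rightarrow> nat \<Rightarrow> nat \<Rightarrow> real" where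
  "Kf c d i p a = c * Jf i (a div d) * (if p = a mod d then 1 else 0)"

definition Kmat :: "real \<Rightarrow> nat \<Rightarrow> nat \<Rightarrow> nat list \<Rightarrow> real mat" where
  "Kmat c m d rs = mat (length rs * d) (m*d) (\<lambda>(t,a). Kf c d (rs!(t div d)) (t mod d) a)"

lemma Kmat_carrier: "Kmat c m d rs \<in> carrier_mat (length rs * d) (m*d)"
  unfolding Kmat_def by simp

lemma kron_one_index:
  assumes "i < dim_row X * d" "j < dim_col X * d"
  shows "kron X (1\<^sub>m d) $$ (i,j) = X $$ (i div d, j div d) * (if i mod d = j mod d then 1 else 0)"
proof -
  have d: "d > 0" using assms by (cases d) auto
  show ?thesis using assms d unfolding kron_def by (simp add: index_one_mat)
qed

lemma Jmat_index: "i < m - 1 \<Longrightarrow> j < m \<Longrightarrow> Jmat m $$ (i,j) = Jf i j"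
  unfolding Jmat_def Jf_def by simp

lemma H_K:
  assumes "d > 0"
  shows "c \<cdot>\<^sub>m kron (Jmat m) (1\<^sub>m d) = Kmat c m d [0..<m-1]"
proof (rule eq_matI)
  show "dim_row (c \<cdot>\<^sub>m kron (Jmat m) (1\<^sub>m d)) = dim_row (Kmat c m d [0..<m-1])"
    unfolding Kmat_def kron_def Jmat_def by simp
  show "dim_col (c \<cdot>\<^sub>m kron (Jmat m) (1\<^sub>m d)) = dim_col (Kmat c m d [0..<m-1])"
    unfolding Kmat_def kron_def Jmat_def by simp
  fix i j assume i: "i < dim_row (Kmat c m d [0..<m-1])" and j: "j < dim_col (Kmat c m d [0..<m-1])"
  have i': "i < (m-1)*d" and j': "j < m*d" using i j unfolding Kmat_def by auto
  have id: "i div d < m - 1" using i' by (simp add: less_mult_imp_div_less)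
  have jd: "j div d < m" using j' by (simp add: less_mult_imp_div_less)
  have "kron (Jmat m) (1\<^sub>m d) $$ (i,j) = Jmat m $$ (i div d, j div d) * (if i mod d = j mod d then 1 else 0)"
    by (rule kron_one_index) (use i' j' in \<open>auto simp: Jmat_def\<close>)
  moreover have "dim_row (kron (Jmat m) (1\<^sub>m d)) = (m-1)*d" "dim_col (kron (Jmat m) (1\<^sub>m d)) = m*d"
    unfolding kron_def Jmat_def by auto
  ultimately show "(c \<cdot>\<^sub>m kron (Jmat m) (1\<^sub>m d)) $$ (i,j) = Kmat c m d [0..<m-1] $$ (i,j)"
    using i' j' id jd unfolding Kmat_def Kf_def by (simp add: Jmat_index)
qed

lemma Jrows_index:
  assumes "i < length rs" "j < m" "\<forall>k\<in>set rs. 1 \<le> k \<and> k < m"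
  shows "Jrows m rs $$ (i,j) = Jf (rs ! i - 1) j"
proof -
  have "rs ! i \<in> set rs" using assms by simp
  hence "1 \<le> rs ! i \<and> rs ! i < m" using assms(3) by blast
  hence "rs ! i - 1 < m - 1" by linarith
  thus ?thesis using assms unfolding Jrows_def select_rows_def Jmat_def Jf_def by simp
qed

lemma Jrows_dims: "dim_row (Jrows m rs) = length rs" "dim_col (Jrows m rs) = m"
  unfolding Jrows_def select_rows_def Jmat_def by auto

lemma sel_K:
  assumes "d > 0" "\<forall>k\<in>set rs. 1 \<le> k \<and> k < m"
  shows "c \<cdot>\<^sub>m kron (Jrows m rs) (1\<^sub>m d) = Kmat c m d (map (\<lambda>k. k - 1) rs)"
proof (rule eq_matI)
  have dr: "dim_row (kron (Jrows m rs) (1\<^sub>m d)) = length rs*d" "dim_col (kron (Jrows m rs) (1\<^sub>m d)) = m*d"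
    unfolding kron_def by (auto simp: Jrows_dims)
  thus "dim_row (c \<cdot>\<^sub>m kron (Jrows m rs) (1\<^sub>m d)) = dim_row (Kmat c m d (map (\<lambda>k. k - 1) rs))"
    "dim_col (c \<cdot>\<^sub>m kron (Jrows m rs) (1\<^sub>m d)) = dim_col (Kmat c m d (map (\<lambda>k. k - 1) rs))"
    unfolding Kmat_def by auto
  fix i j assume i: "i < dim_row (Kmat c m d (map (\<lambda>k. k - 1) rs))" and j: "j < dim_col (Kmat c m d (map (\<lambda>k. k - 1) rs))"
  have i': "i < length rs*d" and j': "j < m*d" using i j unfolding Kmat_def by auto
  have id: "i div d < length rs" using i' by (simp add: less_mult_imp_div_less)
  have jd: "j div d < m" using j' by (simp add: less_mult_imp_div_less)
  have "kron (Jrows m rs) (1\<^sub>m d) $$ (i,j) = Jrows m rs $$ (i div d, j div d) * (if i mod d = j mod d then 1 else 0)"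
    by (rule kron_one_index) (use i' j' in \<open>auto simp: Jrows_dims\<close>)
  thus "(c \<cdot>\<^sub>m kron (Jrows m rs) (1\<^sub>m d)) $$ (i,j) = Kmat c m d (map (\<lambda>k. k - 1) rs) $$ (i,j)"
    using i' j' id jd dr unfolding Kmat_def Kf_def by (simp add: Jrows_index[OF id jd assms(2)])
qed

lemma stack_K:
  assumes "d > 0"
  shows "stack (Kmat c m d r1) (Kmat c m d r2) = Kmat c m d (r1 @ r2)"
proof (rule eq_matI)
  show "dim_row (stack (Kmat c m d r1) (Kmat c m d r2)) = dim_row (Kmat c m d (r1 @ r2))"
    "dim_col (stack (Kmat c m d r1) (Kmat c m d r2)) = dim_col (Kmat c m d (r1 @ r2))"
    unfolding stack_def Kmat_def by (auto simp: algebra_simps)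
  fix i j assume i: "i < dim_row (Kmat c m d (r1 @ r2))" and j: "j < dim_col (Kmat c m d (r1 @ r2))"
  have i': "i < (length r1 + length r2)*d" and j': "j < m*d" using i j unfolding Kmat_def by auto
  show "stack (Kmat c m d r1) (Kmat c m d r2) $$ (i,j) = Kmat c m d (r1 @ r2) $$ (i,j)"
  proof (cases "i < length r1 * d")
    case True
    have "i div d < length r1" using True by (simp add: less_mult_imp_div_less)
    thus ?thesis using True i' j' unfolding stack_def Kmat_def by (simp add: nth_append)
  next
    case False
    define k where "k = i - length r1 * d"
    have ik: "i = length r1 * d + k" using False unfolding k_def by simp
    have a: "(i - length r1 * d) div d = i div d - length r1"
      unfolding ik using assms by simp
    have b: "(i - length r1 * d) mod d = i mod d"
      unfolding ik using assms by simp
    have c: "\<not> i div d < length r1" unfolding ik using assms by simp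
    have e: "i - length r1 * d < length r2 * d" using False i' by (simp add: algebra_simps)
    show ?thesis using False i' j' e a b c unfolding stack_def Kmat_def by (simp add: nth_append)
  qed
qed

lemma Kmat_index: "t < length rs * d \<Longrightarrow> a < m * d \<Longrightarrow> Kmat c m d rs $$ (t,a) = Kf c d (rs!(t div d)) (t mod d) a"
  unfolding Kmat_def by simp

lemma gram_K_entry:
  assumes a: "a < m*d" and b: "b < m*d"
  shows "(transpose_mat (Kmat c m d rs) * Kmat c m d rs) $$ (a,b)
     = (\<Sum>s<length rs. \<Sum>p<d. Kf c d (rs!s) p a * Kf c d (rs!s) p b)"
proof -
  let ?K = "Kmat c m d rs"
  have d: "d > 0" using a by (cases d) auto
  have "(transpose_mat ?K * ?K) $$ (a,b) = row (transpose_mat ?K) a \<bullet> col ?K b"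
    using a b by (simp add: Kmat_def)
  also have "\<dots> = (\<Sum>t\<in>{0..<length rs * d}. ?K $$ (t,a) * ?K $$ (t,b))"
    using a b unfolding scalar_prod_def by (simp add: Kmat_def)
  also have "\<dots> = (\<Sum>s<length rs. \<Sum>p<d. ?K $$ (s*d+p,a) * ?K $$ (s*d+p,b))"
    by (rule sum_split_block)
  also have "\<dots> = (\<Sum>s<length rs. \<Sum>p<d. Kf c d (rs!s) p a * Kf c d (rs!s) p b)"
  proof (intro sum.cong refl)
    fix s p assume s: "s \<in> {..<length rs}" and p: "p \<in> {..<d}"
    have lt: "s*d+p < length rs * d"
    proof -
      have "s*d + p < s*d + d" using p by simp
      also have "\<dots> = Suc s * d" by simp
      also have "\<dots> \<le> length rs * d" using s by (intro mult_right_mono) auto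
      finally show ?thesis .
    qed
    have "(s*d+p) div d = s" "(s*d+p) mod d = p" using p d by auto
    thus "?K $$ (s*d+p,a) * ?K $$ (s*d+p,b) = Kf c d (rs!s) p a * Kf c d (rs!s) p b"
      using lt a b by (simp add: Kmat_index)
  qed
  finally show ?thesis .
qed

lemma gram_K:
  assumes "distinct rs" "set rs = {0..<m-1}"
  shows "transpose_mat (Kmat c m d rs) * Kmat c m d rs = transpose_mat (Kmat c m d [0..<m-1]) * Kmat c m d [0..<m-1]"
proof (rule eq_matI)
  show "dim_row (transpose_mat (Kmat c m d rs) * Kmat c m d rs) = dim_row (transpose_mat (Kmat c m d [0..<m-1]) * Kmat c m d [0..<m-1])"
    "dim_col (transpose_mat (Kmat c m d rs) * Kmat c m d rs) = dim_col (transpose_mat (Kmat c m d [0..<m-1]) * Kmat c m d [0..<m-1])"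
    by (simp_all add: Kmat_def)
  fix a b assume "a < dim_row (transpose_mat (Kmat c m d [0..<m-1]) * Kmat c m d [0..<m-1])"
    "b < dim_col (transpose_mat (Kmat c m d [0..<m-1]) * Kmat c m d [0..<m-1])"
  hence a: "a < m*d" and b: "b < m*d" by (simp_all add: Kmat_def)
  let ?G = "\<lambda>i. \<Sum>p<d. Kf c d i p a * Kf c d i p b"
  have "(transpose_mat (Kmat c m d rs) * Kmat c m d rs) $$ (a,b) = (\<Sum>s<length rs. ?G (rs!s))"
    by (rule gram_K_entry[OF a b])
  also have "\<dots> = (\<Sum>i\<in>set rs. ?G i)" by (rule sum_nth_distinct[OF assms(1)])
  also have "\<dots> = (\<Sum>i\<in>set [0..<m-1]. ?G i)" using assms(2) by simp
  also have "\<dots> = (\<Sum>s<length [0..<m-1]. ?G ([0..<m-1]!s))" by (rule sum_nth_distinct[symmetric]) simp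
  also have "\<dots> = (transpose_mat (Kmat c m d [0..<m-1]) * Kmat c m d [0..<m-1]) $$ (a,b)"
    by (rule gram_K_entry[OF a b, symmetric])
  finally show "(transpose_mat (Kmat c m d rs) * Kmat c m d rs) $$ (a,b) = (transpose_mat (Kmat c m d [0..<m-1]) * Kmat c m d [0..<m-1]) $$ (a,b)" .
qed


definition Tf :: "nat \<Rightarrow> nat \<Rightarrow> real" where
  "Tf i s = (if s = i then 2 else if s = i+1 \<or> i = s+1 then -1 else 0)"

lemma Jf_sum:
  assumes "i+1 < m"
  shows "(\<Sum>j<m. Jf i j * g j) = g (i+1) - g i"
proof -
  have "(\<Sum>j<m. Jf i j * g j) = (\<Sum>j<m. (if j = i+1 then g (i+1) else 0) - (if j = i then g i else 0))"
    by (intro sum.cong refl) (auto simp: Jf_def)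
  also have "\<dots> = g (i+1) - g i" using assms by (simp add: sum_subtractf)
  finally show ?thesis .
qed

lemma JJ_entry: "i+1 < m \<Longrightarrow> (\<Sum>j<m. Jf i j * Jf i' j) = Tf i i'"
  by (subst Jf_sum) (auto simp: Jf_def Tf_def)

lemma Tf_sum:
  assumes "i < n"
  shows "(\<Sum>s<n. Tf i s * u s) = 2 * u i - (if i+1<n then u (i+1) else 0) - (if 0<i then u (i-1) else 0)"
proof -
  have "(\<Sum>s<n. Tf i s * u s) = (\<Sum>s<n. 2 * (if s = i then u i else 0) - (if s = i+1 then u (i+1) else 0)
        - (if s+1 = i then u (i-1) else 0))"
    by (intro sum.cong refl) (auto simp: Tf_def)
  also have "\<dots> = 2 * (\<Sum>s<n. (if s = i then u i else 0)) - (\<Sum>s<n. (if s = i+1 then u (i+1) else 0))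
        - (\<Sum>s<n. (if s+1 = i then u (i-1) else 0))"
    by (simp only: sum_subtractf sum_distrib_left)
  also have "(\<Sum>s<n. (if s+1 = i then u (i-1) else 0)) = (if 0<i then u (i-1) else 0)"
  proof (cases "0 < i")
    case True
    have "(\<Sum>s<n. (if s+1 = i then u (i-1) else 0)) = (\<Sum>s<n. (if s = i-1 then u (i-1) else 0))"
      using True by (intro sum.cong refl) auto
    thus ?thesis using True assms by simp
  qed simp
  finally show ?thesis using assms by simp
qed

lemma HH_entry:
  assumes a: "a < (m-1)*d" and b: "b < (m-1)*d"
  shows "(Kmat c m d [0..<m-1] * transpose_mat (Kmat c m d [0..<m-1])) $$ (a,b)
    = c^2 * (if a mod d = b mod d then 1 else 0) * Tf (a div d) (b div d)"
proof -
  let ?K = "Kmat c m d [0..<m-1]"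
  have d: "d > 0" using a by (cases d) auto
  have ad: "a div d < m-1" "b div d < m-1" using a b by (simp_all add: less_mult_imp_div_less)
  have "(?K * transpose_mat ?K) $$ (a,b) = row ?K a \<bullet> col (transpose_mat ?K) b"
    using a b by (simp add: Kmat_def)
  also have "\<dots> = (\<Sum>t\<in>{0..<m * d}. ?K $$ (a,t) * ?K $$ (b,t))"
    using a b unfolding scalar_prod_def by (simp add: Kmat_def)
  also have "\<dots> = (\<Sum>j<m. \<Sum>q<d. ?K $$ (a,j*d+q) * ?K $$ (b,j*d+q))"
    by (rule sum_split_block)
  also have "\<dots> = (\<Sum>j<m. \<Sum>q<d. (c * Jf (a div d) j * (if a mod d = q then 1 else 0)) * (c * Jf (b div d) j * (if b mod d = q then 1 else 0)))"
  proof (intro sum.cong refl)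
    fix j q assume j: "j \<in> {..<m}" and q: "q \<in> {..<d}"
    have lt: "j*d+q < m * d"
    proof -
      have "j*d + q < j*d + d" using q by simp
      also have "\<dots> = Suc j * d" by simp
      also have "\<dots> \<le> m * d" using j by (intro mult_right_mono) auto
      finally show ?thesis .
    qed
    have "(j*d+q) div d = j" "(j*d+q) mod d = q" using q d by auto
    thus "?K $$ (a,j*d+q) * ?K $$ (b,j*d+q) = (c * Jf (a div d) j * (if a mod d = q then 1 else 0)) * (c * Jf (b div d) j * (if b mod d = q then 1 else 0))"
      using lt a b ad by (simp add: Kmat_index Kf_def)
  qed
  also have "\<dots> = (\<Sum>j<m. c^2 * (if a mod d = b mod d then 1 else 0) * (Jf (a div d) j * Jf (b div d) j))"
  proof (intro sum.cong refl)
    fix j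
    have "(\<Sum>q<d. (c * Jf (a div d) j * (if a mod d = q then 1 else 0)) * (c * Jf (b div d) j * (if b mod d = q then 1 else 0)))
      = (\<Sum>q<d. if q = a mod d then (if a mod d = b mod d then c^2 * (Jf (a div d) j * Jf (b div d) j) else 0) else 0)"
      by (intro sum.cong refl) (auto simp: power2_eq_square)
    also have "\<dots> = c^2 * (if a mod d = b mod d then 1 else 0) * (Jf (a div d) j * Jf (b div d) j)"
      using d by simp
    finally show "(\<Sum>q<d. (c * Jf (a div d) j * (if a mod d = q then 1 else 0)) * (c * Jf (b div d) j * (if b mod d = q then 1 else 0)))
      = c^2 * (if a mod d = b mod d then 1 else 0) * (Jf (a div d) j * Jf (b div d) j)" .
  qed
  also have "\<dots> = c^2 * (if a mod d = b mod d then 1 else 0) * (\<Sum>j<m. Jf (a div d) j * Jf (b div d) j)"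
    by (simp add: sum_distrib_left)
  also have "\<dots> = c^2 * (if a mod d = b mod d then 1 else 0) * Tf (a div d) (b div d)"
    using ad by (simp add: JJ_entry)
  finally show ?thesis .
qed

lemma HH_action:
  assumes v: "v \<in> carrier_vec ((m-1)*d)" and a: "a < (m-1)*d"
  shows "(Kmat c m d [0..<m-1] * transpose_mat (Kmat c m d [0..<m-1]) *\<^sub>v v) $ a
    = c^2 * (2 * v $ ((a div d)*d + a mod d)
       - (if a div d + 1 < m-1 then v $ ((a div d + 1)*d + a mod d) else 0)
       - (if 0 < a div d then v $ ((a div d - 1)*d + a mod d) else 0))"
proof -
  let ?K = "Kmat c m d [0..<m-1]"
  let ?i = "a div d" and ?p = "a mod d"
  have d: "d > 0" using a by (cases d) auto
  have ad: "?i < m-1" using a by (simp add: less_mult_imp_div_less)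
  have "(?K * transpose_mat ?K *\<^sub>v v) $ a = row (?K * transpose_mat ?K) a \<bullet> v"
    using a by (simp add: Kmat_def)
  also have "\<dots> = (\<Sum>b\<in>{0..<(m-1)*d}. (?K * transpose_mat ?K) $$ (a,b) * v $ b)"
    using a v unfolding scalar_prod_def by (simp add: Kmat_def)
  also have "\<dots> = (\<Sum>s<m-1. \<Sum>q<d. (?K * transpose_mat ?K) $$ (a,s*d+q) * v $ (s*d+q))"
    by (rule sum_split_block)
  also have "\<dots> = (\<Sum>s<m-1. \<Sum>q<d. (if q = ?p then c^2 * Tf ?i s * v $ (s*d+?p) else 0))"
  proof (intro sum.cong refl)
    fix s q assume s: "s \<in> {..<m-1}" and q: "q \<in> {..<d}"
    have lt: "s*d+q < (m-1) * d"
    proof -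
      have "s*d + q < s*d + d" using q by simp
      also have "\<dots> = Suc s * d" by simp
      also have "\<dots> \<le> (m-1) * d" using s by (intro mult_right_mono) auto
      finally show ?thesis .
    qed
    have "(s*d+q) div d = s" "(s*d+q) mod d = q" using q d by auto
    thus "(?K * transpose_mat ?K) $$ (a,s*d+q) * v $ (s*d+q) = (if q = ?p then c^2 * Tf ?i s * v $ (s*d+?p) else 0)"
      using HH_entry[OF a lt] by auto
  qed
  also have "\<dots> = (\<Sum>s<m-1. c^2 * (Tf ?i s * v $ (s*d+?p)))"
    using d by (simp add: mult.assoc)
  also have "\<dots> = c^2 * (\<Sum>s<m-1. Tf ?i s * v $ (s*d+?p))"
    by (simp add: sum_distrib_left)
  also have "\<dots> = c^2 * (2 * v $ (?i*d + ?p)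
       - (if ?i + 1 < m-1 then v $ ((?i + 1)*d + ?p) else 0)
       - (if 0 < ?i then v $ ((?i - 1)*d + ?p) else 0))"
    using Tf_sum[OF ad, of "\<lambda>s. v $ (s*d+?p)"] by simp
  finally show ?thesis .
qed



fun Vc :: "real \<Rightarrow> nat \<Rightarrow> real" where
  "Vc x 0 = 0"
| "Vc x (Suc 0) = 1"
| "Vc x (Suc (Suc k)) = 2 * x * Vc x (Suc k) - Vc x k"

lemma V_neg: "Vc (-x) k = (-1)^(k+1) * Vc x k"
  by (induction x k rule: Vc.induct) (auto simp: algebra_simps)

lemma V_ge1: assumes "x \<ge> 1" shows "Vc x (Suc k) \<ge> Vc x k + 1 \<and> Vc x k \<ge> 0"
proof (induction k)
  case 0 then show ?case by simp
next
  case (Suc k)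
  hence h1: "Vc x (Suc k) \<ge> 1" by linarith
  have "2 * x * Vc x (Suc k) \<ge> 2 * Vc x (Suc k)" using assms h1 by (simp add: mult_right_mono)
  moreover have "Vc x (Suc (Suc k)) = 2*x*Vc x (Suc k) - Vc x k" by simp
  ultimately show ?case using Suc h1 by linarith
qed

lemma V_sin: "sin t * Vc (cos t) k = sin (real k * t)"
proof (induction "cos t" k rule: Vc.induct)
  case 1 then show ?case by simp
next
  case 2 then show ?case by simp
next
  case (3 k)
  have e: "sin (real (Suc (Suc k)) * t) = 2 * cos t * sin (real (Suc k) * t) - sin (real k * t)"
  proof -
    have "sin (real (Suc (Suc k)) * t) = sin (real (Suc k) * t + t)" by (simp add: algebra_simps)
    moreover have "sin (real k * t) = sin (real (Suc k) * t - t)" by (simp add: algebra_simps)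
    ultimately show ?thesis by (simp add: sin_add sin_diff)
  qed
  show ?case using 3 e by (simp add: algebra_simps)
qed

lemma V_pos:
  assumes m: "m \<ge> 1" and x: "x > cos (pi / real m)"
  shows "Vc x m > 0"
proof (cases "x \<ge> 1")
  case True
  obtain k where k: "m = Suc k" using m by (cases m) auto
  show ?thesis using V_ge1[OF True, of k] k by simp
next
  case False
  have xm1: "x > -1" using x cos_ge_minus_one[of "pi / real m"] by linarith
  define t where "t = arccos x"
  have ct: "cos t = x" unfolding t_def using xm1 False by simp
  have t0: "0 < t" unfolding t_def using xm1 False by (simp add: arccos_lt_bounded)
  have tpi: "t < pi" unfolding t_def using xm1 False by (simp add: arccos_lt_bounded)
  have pm: "0 < pi / real m" "pi / real m \<le> pi" using m by (auto simp: field_simps)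
  have tlt: "t < pi / real m"
  proof (rule ccontr)
    assume "\<not> t < pi / real m"
    hence "cos t \<le> cos (pi / real m)" using pm tpi by (intro cos_monotone_0_pi_le) auto
    thus False using ct x by simp
  qed
  have st: "sin t > 0" using t0 tpi by (rule sin_gt_zero)
  have "real m * t < pi" using tlt m by (simp add: field_simps)
  moreover have "real m * t > 0" using t0 m by simp
  ultimately have "sin (real m * t) > 0" by (intro sin_gt_zero)
  hence "sin t * Vc x m > 0" using V_sin[of t m] ct by simp
  thus ?thesis using st by (simp add: zero_less_mult_iff)
qed

lemma V_nonzero:
  assumes m: "m \<ge> 1" and x: "\<bar>x\<bar> > cos (pi / real m)"
  shows "Vc x m \<noteq> 0"
proof (cases "x \<ge> 0")
  case True thus ?thesis using V_pos[OF m] x by force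
next
  case False
  hence "-x > cos (pi / real m)" using x by simp
  hence "Vc (-x) m > 0" using V_pos[OF m] by blast
  thus ?thesis unfolding V_neg by (metis mult_zero_right less_irrefl)
qed

lemma recur_bound:
  fixes u :: "nat \<Rightarrow> real"
  assumes n: "n \<ge> 1" and nz: "\<exists>i<n. u i \<noteq> 0"
    and eq: "\<forall>i<n. mu * u i = 2 * u i - (if i+1<n then u (i+1) else 0) - (if 0<i then u (i-1) else 0)"
  shows "\<bar>1 - mu/2\<bar> \<le> cos (pi / real (n+1))"
proof -
  define w where "w k = (if 1 \<le> k \<and> k \<le> n then u (k-1) else 0)" for k
  define x where "x = 1 - mu/2"
  have rec: "w (k+2) = 2*x*w (k+1) - w k" if k: "k < n" for k
  proof -
    have e: "mu * u k = 2 * u k - (if k+1<n then u (k+1) else 0) - (if 0<k then u (k-1) else 0)"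
      using eq k by blast
    have w1: "w (k+1) = u k" using k unfolding w_def by simp
    have w2: "w (k+2) = (if k+1<n then u (k+1) else 0)" using k unfolding w_def by auto
    have w0: "w k = (if 0<k then u (k-1) else 0)" using k unfolding w_def by auto
    show ?thesis unfolding w1 w2 w0 x_def using e by (simp add: algebra_simps)
  qed
  have P: "(k \<le> n+1 \<longrightarrow> w k = w 1 * Vc x k) \<and> (Suc k \<le> n+1 \<longrightarrow> w (Suc k) = w 1 * Vc x (Suc k))" for k
  proof (induction k)
    case 0 then show ?case unfolding w_def by simp
  next
    case (Suc k)
    have "Suc (Suc k) \<le> n+1 \<longrightarrow> w (Suc (Suc k)) = w 1 * Vc x (Suc (Suc k))"
    proof
      assume h: "Suc (Suc k) \<le> n+1"
      hence "k < n" by simp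
      hence "w (k+2) = 2*x*w (k+1) - w k" by (rule rec)
      moreover have "w (k+1) = w 1 * Vc x (Suc k)" "w k = w 1 * Vc x k" using Suc h by auto
      ultimately show "w (Suc (Suc k)) = w 1 * Vc x (Suc (Suc k))" by (simp add: algebra_simps)
    qed
    thus ?case using Suc by simp
  qed
  have w1nz: "w 1 \<noteq> 0"
  proof
    assume h: "w 1 = 0"
    obtain i where i: "i < n" "u i \<noteq> 0" using nz by blast
    have "w (i+1) = u i" using i unfolding w_def by simp
    moreover have "w (i+1) = 0" using P[of "i+1"] h i by simp
    ultimately show False using i by simp
  qed
  have "w (n+1) = 0" unfolding w_def by simp
  hence "Vc x (n+1) = 0" using P[of "n+1"] w1nz by simp
  hence "\<not> \<bar>x\<bar> > cos (pi / real (n+1))" using V_nonzero[of "n+1" x] by auto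
  thus ?thesis unfolding x_def by simp
qed

lemma HH_carrier: "Kmat c m d [0..<m-1] * transpose_mat (Kmat c m d [0..<m-1]) \<in> carrier_mat ((m-1)*d) ((m-1)*d)"
proof -
  have K: "Kmat c m d [0..<m-1] \<in> carrier_mat ((m-1)*d) (m*d)" using Kmat_carrier[of c m d "[0..<m-1]"] by simp
  show ?thesis by (rule mult_carrier_mat[OF K transpose_carrier_mat[THEN iffD2, OF K]])
qed

lemma HH_eig_bound:
  assumes m: "m \<ge> 2" and c: "c \<noteq> 0"
    and ev: "eigenvalue (Kmat c m d [0..<m-1] * transpose_mat (Kmat c m d [0..<m-1])) l"
  shows "c^2 * (2 - 2 * cos (pi / real m)) \<le> l \<and> l \<le> c^2 * (2 + 2 * cos (pi / real m))"
proof -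
  let ?G = "Kmat c m d [0..<m-1] * transpose_mat (Kmat c m d [0..<m-1])"
  obtain v where v: "v \<in> carrier_vec ((m-1)*d)" "v \<noteq> 0\<^sub>v ((m-1)*d)" "?G *\<^sub>v v = l \<cdot>\<^sub>v v"
    using ev HH_carrier[of c m d] unfolding eigenvalue_def eigenvector_def by auto
  obtain a where a: "a < (m-1)*d" "v $ a \<noteq> 0" using v(1,2) by (metis eq_vecI carrier_vecD index_zero_vec(1,2))
  have d: "d > 0" using a by (cases d) auto
  define p where "p = a mod d"
  have pd: "p < d" unfolding p_def using d by simp
  define u where "u s = v $ (s*d+p)" for s
  define mu where "mu = l / c^2"
  have c2: "c^2 > 0" using c by simp
  have eq: "\<forall>i<m-1. mu * u i = 2 * u i - (if i+1<m-1 then u (i+1) else 0) - (if 0<i then u (i-1) else 0)"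
  proof (intro allI impI)
    fix i assume i: "i < m-1"
    define a' where "a' = i*d+p"
    have a'lt: "a' < (m-1)*d"
    proof -
      have "i*d + p < i*d + d" using pd by simp
      also have "\<dots> = Suc i * d" by simp
      also have "\<dots> \<le> (m-1) * d" using i by (intro mult_right_mono) auto
      finally show ?thesis unfolding a'_def .
    qed
    have dv: "a' div d = i" "a' mod d = p" unfolding a'_def using pd d by auto
    have "(?G *\<^sub>v v) $ a' = l * u i" using v(3) a'lt v(1) unfolding u_def a'_def by simp
    moreover have "(?G *\<^sub>v v) $ a' = c^2 * (2 * u i - (if i+1<m-1 then u (i+1) else 0) - (if 0<i then u (i-1) else 0))"
      using HH_action[OF v(1) a'lt] unfolding dv u_def by simp
    ultimately have "l * u i = c^2 * (2 * u i - (if i+1<m-1 then u (i+1) else 0) - (if 0<i then u (i-1) else 0))" by simp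
    thus "mu * u i = 2 * u i - (if i+1<m-1 then u (i+1) else 0) - (if 0<i then u (i-1) else 0)"
      unfolding mu_def using c2 by (simp add: field_simps)
  qed
  have nz: "\<exists>i<m-1. u i \<noteq> 0"
  proof (intro exI conjI)
    show "a div d < m-1" using a(1) by (simp add: less_mult_imp_div_less)
    show "u (a div d) \<noteq> 0" unfolding u_def p_def using a(2) by simp
  qed
  have "\<bar>1 - mu/2\<bar> \<le> cos (pi / real (m - 1 + 1))" using recur_bound[of "m-1" u mu] m nz eq by simp
  hence "\<bar>1 - mu/2\<bar> \<le> cos (pi / real m)" using m by simp
  hence "2 - 2 * cos (pi / real m) \<le> mu \<and> mu \<le> 2 + 2 * cos (pi / real m)" by linarith
  hence "c^2 * (2 - 2 * cos (pi / real m)) \<le> c^2 * mu \<and> c^2 * mu \<le> c^2 * (2 + 2 * cos (pi / real m))"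
    using c2 by simp
  moreover have "c^2 * mu = l" unfolding mu_def using c2 by simp
  ultimately show ?thesis by simp
qed

lemma HH_eig_exists:
  assumes m: "m \<ge> 2" and d: "d > 0" and sm: "sin (real m * b) = 0" and sb: "sin b \<noteq> 0"
  shows "eigenvalue (Kmat c m d [0..<m-1] * transpose_mat (Kmat c m d [0..<m-1])) (c^2 * (2 - 2 * cos b))"
proof -
  let ?G = "Kmat c m d [0..<m-1] * transpose_mat (Kmat c m d [0..<m-1])"
  let ?l = "c^2 * (2 - 2 * cos b)"
  define s where "s k = sin (real k * b)" for k :: nat
  have srec: "s (k+2) + s k = 2 * cos b * s (k+1)" for k
  proof -
    have "s (k+2) = sin (real (k+1) * b + b)" unfolding s_def by (simp add: algebra_simps)
    moreover have "s k = sin (real (k+1) * b - b)" unfolding s_def by (simp add: algebra_simps)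
    ultimately show ?thesis unfolding s_def by (simp add: sin_add sin_diff)
  qed
  define v where "v = vec ((m-1)*d) (\<lambda>a. if a mod d = 0 then s (a div d + 1) else 0)"
  have vc: "v \<in> carrier_vec ((m-1)*d)" unfolding v_def by simp
  have pos: "0 < (m-1)*d" using m d by simp
  have vnz: "v \<noteq> 0\<^sub>v ((m-1)*d)"
  proof
    assume "v = 0\<^sub>v ((m-1)*d)"
    hence "v $ 0 = 0" using pos by simp
    moreover have "v $ 0 = sin b" unfolding v_def s_def using pos by simp
    ultimately show False using sb by simp
  qed
  have idx: "v $ (j*d + q) = (if q = 0 then s (j+1) else 0)" if "j < m-1" "q < d" for j q
  proof -
    have "j*d + q < j*d + d" using that by simp
    also have "\<dots> = Suc j * d" by simp
    also have "\<dots> \<le> (m-1) * d" using that by (intro mult_right_mono) auto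
    finally have lt: "j*d+q < (m-1)*d" .
    have "(j*d+q) div d = j" "(j*d+q) mod d = q" using that d by auto
    thus ?thesis unfolding v_def using lt d by simp
  qed
  have "?G *\<^sub>v v = ?l \<cdot>\<^sub>v v"
  proof (rule eq_vecI)
    show "dim_vec (?G *\<^sub>v v) = dim_vec (?l \<cdot>\<^sub>v v)" using vc by (simp add: Kmat_def)
    fix a assume "a < dim_vec (?l \<cdot>\<^sub>v v)"
    hence a: "a < (m-1)*d" using vc by simp
    let ?i = "a div d" and ?p = "a mod d"
    have i: "?i < m-1" using a by (simp add: less_mult_imp_div_less)
    have p: "?p < d" using d by simp
    have va: "v $ a = v $ (?i*d + ?p)" by simp
    have lhs: "(?G *\<^sub>v v) $ a = c^2 * (2 * v $ (?i*d + ?p)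
       - (if ?i + 1 < m-1 then v $ ((?i + 1)*d + ?p) else 0)
       - (if 0 < ?i then v $ ((?i - 1)*d + ?p) else 0))"
      by (rule HH_action[OF vc a])
    show "(?G *\<^sub>v v) $ a = (?l \<cdot>\<^sub>v v) $ a"
    proof (cases "?p = 0")
      case False
      have z0: "v $ (?i*d + ?p) = 0" using idx[OF i p] False by simp
      have z1: "(if ?i + 1 < m-1 then v $ ((?i + 1)*d + ?p) else 0) = 0" using idx[of "?i+1" ?p] p False by simp
      have z2: "(if 0 < ?i then v $ ((?i - 1)*d + ?p) else 0) = 0" using idx[of "?i-1" ?p] p False i by simp
      have "(?G *\<^sub>v v) $ a = 0" unfolding lhs z0 z1 z2 by simp
      moreover have "(?l \<cdot>\<^sub>v v) $ a = ?l * v $ (?i*d + ?p)" using a vc by simp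
      ultimately show ?thesis using z0 by simp
    next
      case True
      have t1: "(if ?i + 1 < m-1 then v $ ((?i + 1)*d + ?p) else 0) = s (?i + 2)"
      proof (cases "?i + 1 < m-1")
        case True thus ?thesis using idx[of "?i+1" ?p] p \<open>?p = 0\<close> by simp
      next
        case False
        hence "?i + 2 = m" using i by simp
        hence "s (?i+2) = 0" unfolding s_def using sm by simp
        thus ?thesis using False by simp
      qed
      have t2: "(if 0 < ?i then v $ ((?i - 1)*d + ?p) else 0) = s ?i"
      proof (cases "0 < ?i")
        case True thus ?thesis using idx[of "?i-1" ?p] p \<open>?p = 0\<close> i by simp
      next
        case False thus ?thesis unfolding s_def by simp
      qed
      have t0: "v $ (?i*d + ?p) = s (?i+1)" using idx[OF i p] True by simp
      have "(?G *\<^sub>v v) $ a = c^2 * (2 * s (?i+1) - s (?i+2) - s ?i)" unfolding lhs t0 t1 t2 by simp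
      also have "\<dots> = ?l * s (?i+1)" using srec[of ?i] by (simp add: algebra_simps)
      also have "\<dots> = (?l \<cdot>\<^sub>v v) $ a" using a vc va t0 by simp
      finally show ?thesis .
    qed
  qed
  thus ?thesis unfolding eigenvalue_def eigenvector_def using vc vnz HH_carrier[of c m d]
    by (auto simp: Kmat_def)
qed



lemma sin_ge_xcos: assumes "0 < x" "x < pi/2" shows "x * cos x < sin x"
proof -
  obtain z where z: "0 < z" "z < x" "sin x - sin 0 = (x - 0) * cos z"
    using MVT2[of 0 x sin cos] assms by auto
  have "cos x < cos z" using z assms cos_mono_less_eq[of x z] by auto
  thus ?thesis using z assms by (simp add: mult_left_mono)
qed

lemma trig_final:
  fixes M :: nat assumes M: "M \<ge> 2"
  shows "sqrt ((2 + 2 * cos (pi / real M)) / (2 - 2 * cos (pi / real M)))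
           = sin (real (M - 1) * pi / real (2 * M)) / sin (pi / real (2 * M))"
    and "real M / 4 \<le> sin (real (M - 1) * pi / real (2 * M)) / sin (pi / real (2 * M))"
    and "sin (real (M - 1) * pi / real (2 * M)) / sin (pi / real (2 * M)) < real M"
proof -
  define b where "b = pi / real (2 * M)"
  have Mpos: "real M \<ge> 2" using M by simp
  have b0: "0 < b" unfolding b_def using M by simp
  have b4: "b \<le> pi / 4" unfolding b_def using Mpos by (simp add: field_simps)
  have bpi2: "b < pi/2" using b4 pi_gt_zero by linarith
  have sb: "sin b > 0" using b0 bpi2 by (intro sin_gt_zero) auto
  have cb: "cos b > 0" using b0 bpi2 by (intro cos_gt_zero) auto
  have a2: "pi / real M = 2 * b" unfolding b_def by simp
  have e1: "sin (real (M - 1) * pi / real (2 * M)) = cos b"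
  proof -
    have "real (M - 1) * pi / real (2 * M) = pi/2 - b" unfolding b_def using M by (simp add: field_simps of_nat_diff)
    thus ?thesis by (simp add: sin_cos_eq)
  qed
  have hi: "2 + 2 * cos (pi / real M) = 4 * (cos b)^2" unfolding a2 cos_double_cos by simp
  have lo: "2 - 2 * cos (pi / real M) = 4 * (sin b)^2" unfolding a2 cos_double_sin by simp
  have "sqrt ((2 + 2 * cos (pi / real M)) / (2 - 2 * cos (pi / real M))) = sqrt ((cos b / sin b)^2)"
    unfolding hi lo by (simp add: power_divide)
  also have "\<dots> = cos b / sin b" using sb cb by simp
  finally show "sqrt ((2 + 2 * cos (pi / real M)) / (2 - 2 * cos (pi / real M)))
           = sin (real (M - 1) * pi / real (2 * M)) / sin (pi / real (2 * M))"
    unfolding e1 b_def[symmetric] .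
  have up: "cos b / sin b < real M"
  proof -
    have "b * cos b < sin b" using sin_ge_xcos b0 bpi2 by blast
    hence "cos b / sin b < 1 / b" using sb b0 by (simp add: field_simps)
    also have "1 / b = 2 * real M / pi" unfolding b_def using M by simp
    also have "\<dots> \<le> real M" using pi_ge_two Mpos by (simp add: field_simps)
    finally show ?thesis .
  qed
  show "sin (real (M - 1) * pi / real (2 * M)) / sin (pi / real (2 * M)) < real M"
    unfolding e1 b_def[symmetric] using up .
  have lowb: "real M / 4 \<le> cos b / sin b"
  proof -
    have "cos b \<ge> cos (pi/3)" using b4 b0 by (intro cos_monotone_0_pi_le) auto
    hence c12: "cos b \<ge> 1/2" by (simp add: cos_60)
    have "sin b \<le> b" using b0 by (intro sin_x_le_x) simp
    have "real M / 4 \<le> real M / pi" using Mpos pi_less_4 by (intro divide_left_mono) auto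
    also have "real M / pi = (1/2) / b" unfolding b_def using M by simp
    also have "\<dots> \<le> cos b / b" using c12 b0 by (intro divide_right_mono) auto
    also have "\<dots> \<le> cos b / sin b" using \<open>sin b \<le> b\<close> sb cb by (simp add: frac_le)
    finally show ?thesis .
  qed
  show "real M / 4 \<le> sin (real (M - 1) * pi / real (2 * M)) / sin (pi / real (2 * M))"
    unfolding e1 b_def[symmetric] using lowb .
qed



lemma lists_ok:
  assumes m1: "m1 \<ge> 1" and m2: "m2 \<ge> 1"
  shows "\<forall>k\<in>set (Mset m1 m2). 1 \<le> k \<and> k < 3*m1*m2"
    and "\<forall>k\<in>set (MCset m1 m2). 1 \<le> k \<and> k < 3*m1*m2"
    and "distinct (map (\<lambda>k. k-1) (Mset m1 m2 @ MCset m1 m2))"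
    and "set (map (\<lambda>k. k-1) (Mset m1 m2 @ MCset m1 m2)) = {0..<3*m1*m2 - 1}"
proof -
  have SM: "set (Mset m1 m2) \<subseteq> {1..<3*m1*m2}"
  proof
    fix k assume "k \<in> set (Mset m1 m2)"
    then obtain i where i: "1 \<le> i" "i < 3*m2" "k = i*m1" unfolding Mset_def by auto
    have "1 \<le> i*m1" using i m1 by simp
    moreover have "i*m1 < 3*m2*m1" using i m1 by simp
    ultimately show "k \<in> {1..<3*m1*m2}" using i by (simp add: algebra_simps)
  qed
  thus "\<forall>k\<in>set (Mset m1 m2). 1 \<le> k \<and> k < 3*m1*m2" by auto
  have SMC: "set (MCset m1 m2) = {1..<3*m1*m2} - set (Mset m1 m2)" unfolding MCset_def by auto
  thus "\<forall>k\<in>set (MCset m1 m2). 1 \<le> k \<and> k < 3*m1*m2" by auto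
  have dM: "distinct (Mset m1 m2)" unfolding Mset_def using m1
    by (auto simp: distinct_map inj_on_def)
  have dMC: "distinct (MCset m1 m2)" unfolding MCset_def by simp
  have dA: "distinct (Mset m1 m2 @ MCset m1 m2)" using dM dMC SMC by auto
  have SA: "set (Mset m1 m2 @ MCset m1 m2) = {1..<3*m1*m2}" using SM SMC by auto
  have inj: "inj_on (\<lambda>k. k-1) (set (Mset m1 m2 @ MCset m1 m2))" unfolding SA inj_on_def by auto
  show "distinct (map (\<lambda>k. k-1) (Mset m1 m2 @ MCset m1 m2))" using dA inj by (simp only: distinct_map)
  have "(\<lambda>k. k-1) ` {1..<3*m1*m2} = {0..<3*m1*m2 - 1}"
  proof
    show "(\<lambda>k. k-1) ` {1..<3*m1*m2} \<subseteq> {0..<3*m1*m2 - 1}" by auto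
    show "{0..<3*m1*m2 - 1} \<subseteq> (\<lambda>k. k-1) ` {1..<3*m1*m2}"
    proof
      fix j assume "j \<in> {0..<3*m1*m2 - 1}"
      hence "j+1 \<in> {1..<3*m1*m2}" "j = (j+1) - 1" by auto
      thus "j \<in> (\<lambda>k. k-1) ` {1..<3*m1*m2}" by blast
    qed
  qed
  thus "set (map (\<lambda>k. k-1) (Mset m1 m2 @ MCset m1 m2)) = {0..<3*m1*m2 - 1}" using SA by (simp only: set_map)
qed


theorem lemma3:
  fixes Lf :: real and m1 m2 d :: nat
  assumes "Lf > 0" and "m1 \<ge> 2" and "m2 \<ge> 1" and "even (m1 * m2)"
    and "d \<ge> 5" and "odd d"
  defines "m \<equiv> 3 * m1 * m2"
  defines "H \<equiv> (real m * Lf) \<cdot>\<^sub>m kron (Jmat m) (1\<^sub>m d)"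
  defines "Abar \<equiv> (real m * Lf) \<cdot>\<^sub>m kron (Jrows m (Mset m1 m2)) (1\<^sub>m d)"
  defines "A \<equiv> (real m * Lf) \<cdot>\<^sub>m kron (Jrows m (MCset m1 m2)) (1\<^sub>m d)"
  shows "real m / 4 \<le> kappa (stack Abar A)
       \<and> kappa (stack Abar A) = kappa H
       \<and> kappa H = sin (real (3 * m1 * m2 - 1) * pi / real (6 * m1 * m2)) / sin (pi / real (6 * m1 * m2))
       \<and> kappa H < real m"
proof -
  define c where "c = real m * Lf"
  have m2': "m \<ge> 2" unfolding m_def using assms(2,3)
    by (metis mult_le_mono mult_numeral_1 mult.commute numeral_le_iff semiring_norm(69) le_trans
        mult_le_mono1 nat_mult_1 one_le_numeral)
  have mpos: "real m > 0" using m2' by simp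
  have c0: "c > 0" unfolding c_def using mpos assms(1) by simp
  have d0: "d > 0" using assms(5) by simp
  define K0 where "K0 = Kmat c m d [0..<m-1]"
  have K0c: "K0 \<in> carrier_mat ((m-1)*d) (m*d)" unfolding K0_def using Kmat_carrier[of c m d "[0..<m-1]"] by simp
  have K0Tc: "transpose_mat K0 \<in> carrier_mat (m*d) ((m-1)*d)" using K0c by simp
  have HK: "H = K0" unfolding H_def K0_def c_def by (rule H_K[OF d0])
  have m1': "m1 \<ge> 1" using assms(2) by simp
  note L = lists_ok[OF m1' assms(3)]
  have L1: "\<forall>k\<in>set (Mset m1 m2). 1 \<le> k \<and> k < m" using L(1) unfolding m_def .
  have L2: "\<forall>k\<in>set (MCset m1 m2). 1 \<le> k \<and> k < m" using L(2) unfolding m_def .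
  define R where "R = map (\<lambda>k. k-1) (Mset m1 m2 @ MCset m1 m2)"
  have Rd: "distinct R" unfolding R_def using L(3) .
  have Rs: "set R = {0..<m-1}" unfolding R_def m_def using L(4) .
  have AbarK: "Abar = Kmat c m d (map (\<lambda>k. k-1) (Mset m1 m2))" unfolding Abar_def c_def by (rule sel_K[OF d0 L1])
  have AK: "A = Kmat c m d (map (\<lambda>k. k-1) (MCset m1 m2))" unfolding A_def c_def by (rule sel_K[OF d0 L2])
  have SK: "stack Abar A = Kmat c m d R" unfolding AbarK AK R_def map_append by (rule stack_K[OF d0])
  have Sc: "stack Abar A \<in> carrier_mat (length R * d) (m*d)" unfolding SK by (rule Kmat_carrier)
  have gram: "transpose_mat (stack Abar A) * stack Abar A = transpose_mat K0 * K0"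
    unfolding SK K0_def by (rule gram_K[OF Rd Rs])
  define lo where "lo = c^2 * (2 - 2 * cos (pi / real m))"
  define hi where "hi = c^2 * (2 + 2 * cos (pi / real m))"
  define P where "P = {l. eigenvalue (transpose_mat K0 * K0) l \<and> l > 0}"
  have pm: "0 < pi / real m" "pi / real m < pi" using m2' by (auto simp: field_simps)
  have spm: "sin (pi / real m) \<noteq> 0" using pm sin_gt_zero by force
  have cos_lt1: "cos (pi / real m) < 1" using pm cos_mono_less_eq[of "pi / real m" 0] by simp
  have cos_gtm1: "cos (pi / real m) > -1" using pm cos_mono_less_eq[of pi "pi / real m"] by simp
  have c2: "c^2 > 0" using c0 by simp
  have lo0: "lo > 0" unfolding lo_def using c2 cos_lt1 by simp
  have hi0: "hi > 0" unfolding hi_def using c2 cos_gtm1 by simp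
  have loP: "lo \<in> P"
  proof -
    have "sin (real m * (pi / real m)) = 0" using mpos by simp
    hence "eigenvalue (K0 * transpose_mat K0) lo" unfolding K0_def lo_def
      by (rule HH_eig_exists[OF m2' d0 _ spm])
    hence "eigenvalue (transpose_mat K0 * K0) lo" using eig_transfer[OF K0c] lo0 by simp
    thus ?thesis unfolding P_def using lo0 by simp
  qed
  have hiP: "hi \<in> P"
  proof -
    have "real m * (pi - pi / real m) = real (m - 1) * pi" using mpos m2' by (simp add: field_simps of_nat_diff)
    hence "sin (real m * (pi - pi / real m)) = 0" by (simp add: sin_npi)
    moreover have "sin (pi - pi / real m) \<noteq> 0" using spm by simp
    ultimately have "eigenvalue (K0 * transpose_mat K0) (c^2 * (2 - 2 * cos (pi - pi / real m)))" unfolding K0_def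
      by (rule HH_eig_exists[OF m2' d0])
    moreover have "c^2 * (2 - 2 * cos (pi - pi / real m)) = hi" unfolding hi_def by simp
    ultimately have "eigenvalue (K0 * transpose_mat K0) hi" by simp
    hence "eigenvalue (transpose_mat K0 * K0) hi" using eig_transfer[OF K0c] hi0 by simp
    thus ?thesis unfolding P_def using hi0 by simp
  qed
  have bnd: "lo \<le> l \<and> l \<le> hi" if l: "l \<in> P" for l
  proof -
    have e: "eigenvalue (transpose_mat K0 * transpose_mat (transpose_mat K0)) l" using l unfolding P_def by simp
    have "l \<noteq> 0" using l unfolding P_def by simp
    hence "eigenvalue (transpose_mat (transpose_mat K0) * transpose_mat K0) l" by (rule eig_transfer[OF K0Tc e])
    hence "eigenvalue (K0 * transpose_mat K0) l" by simp
    thus ?thesis unfolding lo_def hi_def K0_def using HH_eig_bound[OF m2' c0[THEN less_imp_neq, symmetric]] by blast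
  qed
  have finP: "finite P"
  proof -
    have "transpose_mat K0 * K0 \<in> carrier_mat (m*d) (m*d)" using K0c K0Tc by (metis mult_carrier_mat)
    hence "finite {l. eigenvalue (transpose_mat K0 * K0) l}" by (rule eig_finite)
    thus ?thesis unfolding P_def by (rule finite_subset[rotated]) auto
  qed
  have MaxP: "Max P = hi" by (rule Max_eqI[OF finP]) (use bnd hiP in auto)
  have MinP: "Min P = lo" by (rule Min_eqI[OF finP]) (use bnd loP in auto)
  have ne: "\<exists>l>0. eigenvalue (transpose_mat K0 * K0) l" using loP unfolding P_def by blast
  have kH: "kappa H = sqrt (hi / lo)"
    unfolding HK kappa_via[OF K0c ne] P_def[symmetric] MaxP MinP ..
  have kS: "kappa (stack Abar A) = sqrt (hi / lo)"
    unfolding kappa_via[OF Sc ne[folded gram]] gram P_def[symmetric] MaxP MinP ..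
  have ratio: "hi / lo = (2 + 2 * cos (pi / real m)) / (2 - 2 * cos (pi / real m))"
    unfolding hi_def lo_def using c2 by simp
  note T = trig_final[OF m2']
  have e1: "real (3 * m1 * m2 - 1) = real (m - 1)" unfolding m_def ..
  have e2: "real (6 * m1 * m2) = real (2 * m)" unfolding m_def by simp
  have kv: "kappa H = sin (real (m - 1) * pi / real (2 * m)) / sin (pi / real (2 * m))"
    unfolding kH ratio by (rule T(1))
  have kS': "kappa (stack Abar A) = kappa H" using kS kH by simp
  show ?thesis unfolding e1 e2 kS' kv using T(2,3) by blast
qed

end
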